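(* Let $m>1$ and $a\in\mathbb{Z}_m$ with $2a^2-2a+1\equiv0\pmod m$, let $x\cdot y=ax+(1-a)y$ and $x\circ y=(1-a)x+ay$ on $\mathbb{Z}_m$. Then for $1\le k<m$, $(\mathbb{Z}_m,\cdot)$ is $k$-translatable if and only if $(\mathbb{Z}_m,\circ)$ is $(m-k)$-translatable (both with respect to the ordering $0,1,\dots,m-1$).
   Context: $(\mathbb{Z}_m,\cdot)$ is a quadratical quasigroup and $(\mathbb{Z}_m,\circ)$ is its dual ($x\circ y=y\cdot x$). A finite groupoid with ordering $q_1,\dots,q_n$ is $k$-translatable ($1\le k<n$) with respect to this ordering if $q_i\cdot q_j=q_{i-1}\cdot q_{j-k}$ for all $i\in\{2,\dots,n\}$, $j\in\{1,\dots,n\}$, indices taken modulo $n$ in $\{1,\dots,n\}$. *)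

theory Defs
  imports Main
begin

text \<open>A finite groupoid with ordering q_1,...,q_n (given as a list q, so q_i = q ! (i-1))
  is k-translatable (1 <= k < n) if q_i * q_j = q_(i-1) * q_(j-k) for all i in {2..n},
  j in {1..n}, indices taken modulo n in {1..n}.  The index (j-k) reduced into {1..n}
  is ((j-k-1) mod n) + 1, i.e. list position (j-k-1) mod n.\<close>
definition k_translatable :: "('a \<Rightarrow> 'a \<Rightarrow> 'a) \<Rightarrow> 'a list \<Rightarrow> nat \<Rightarrow> bool" where
  "k_translatable op q k \<longleftrightarrow>
     1 \<le> k \<and> k < length q \<and>
     (\<forall>i\<in>{2..length q}. \<forall>j\<in>{1..length q}.
        op (q ! (i - 1)) (q ! (j - 1)) =
        op (q ! (i - 2)) (q ! nat ((int j - int k - 1) mod int (length q))))"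

definition zm_order :: "nat \<Rightarrow> int list" where
  "zm_order m = map int [0..<m]"

definition dot_op :: "nat \<Rightarrow> int \<Rightarrow> int \<Rightarrow> int \<Rightarrow> int" where
  "dot_op m a x y = (a * x + (1 - a) * y) mod int m"

definition circ_op :: "nat \<Rightarrow> int \<Rightarrow> int \<Rightarrow> int \<Rightarrow> int" where
  "circ_op m a x y = ((1 - a) * x + a * y) mod int m"

end

theory Submission
  imports Defs "HOL-Number_Theory.Number_Theory"
begin

lemma zm_nth: "n < m \<Longrightarrow> zm_order m ! n = int n"
  by (simp add: zm_order_def)

lemma zm_len[simp]: "length (zm_order m) = m"
  by (simp add: zm_order_def)

lemma zm_nth_mod: "m > 0 \<Longrightarrow> zm_order m ! nat (x mod int m) = x mod int m"
proof -
  assume "m > 0"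
  hence "nat (x mod int m) < m" "0 \<le> x mod int m"
    by (simp_all add: nat_less_iff)
  thus ?thesis by (simp add: zm_nth)
qed

lemma key:
  fixes m k :: nat and c d :: int
  assumes "m > 1" "1 \<le> k" "k < m"
  assumes h: "\<And>x y. op x y = (c * x + d * y) mod int m"
  shows "k_translatable op (zm_order m) k \<longleftrightarrow> int m dvd (c + d * int k)"
proof -
  have eq: "op (int (i - 1)) (int (j - 1)) = op (int (i - 2)) ((int j - int k - 1) mod int m)
      \<longleftrightarrow> int m dvd (c + d * int k)" if "2 \<le> i" "1 \<le> j" for i j
  proof -
    define q where "q = (int j - int k - 1) div int m"
    have r: "(int j - int k - 1) mod int m = (int j - int k - 1) - int m * q"
      by (simp add: q_def minus_div_mult_eq_mod[symmetric] algebra_simps)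
    have "op (int (i - 1)) (int (j - 1)) = op (int (i - 2)) ((int j - int k - 1) mod int m)
      \<longleftrightarrow> int m dvd ((c * int (i - 1) + d * int (j - 1)) - (c * int (i - 2) + d * ((int j - int k - 1) mod int m)))"
      by (simp add: h mod_eq_dvd_iff)
    also have "(c * int (i - 1) + d * int (j - 1)) - (c * int (i - 2) + d * ((int j - int k - 1) mod int m))
       = (c + d * int k) + int m * (d * q)"
      unfolding r using that by (simp add: of_nat_diff algebra_simps)
    also have "int m dvd ((c + d * int k) + int m * (d * q)) \<longleftrightarrow> int m dvd (c + d * int k)"
      by (simp add: dvd_add_left_iff)
    finally show ?thesis .
  qed
  show ?thesis
  proof
    assume "k_translatable op (zm_order m) k"
    hence all: "\<forall>i\<in>{2..m}. \<forall>j\<in>{1..m}. op (zm_order m ! (i - 1)) (zm_order m ! (j - 1)) =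
        op (zm_order m ! (i - 2)) (zm_order m ! nat ((int j - int k - 1) mod int m))"
      unfolding k_translatable_def by (simp add: zm_order_def)
    have "op (zm_order m ! (2 - 1)) (zm_order m ! (1 - 1)) =
        op (zm_order m ! (2 - 2)) (zm_order m ! nat ((int 1 - int k - 1) mod int m))"
      by (rule all[rule_format]) (use assms(1) in auto)
    hence "op (int (2 - 1)) (int (1 - 1)) = op (int (2 - 2)) ((int 1 - int k - 1) mod int m)"
      using assms(1) by (simp add: zm_nth zm_nth_mod del: of_nat_diff)
    thus "int m dvd (c + d * int k)" using eq[of 2 1] by simp
  next
    assume H: "int m dvd (c + d * int k)"
    show "k_translatable op (zm_order m) k"
      unfolding k_translatable_def
    proof (intro conjI ballI)
      fix i j assume i: "i \<in> {2..length (zm_order m)}" and j: "j \<in> {1..length (zm_order m)}"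
      hence "i \<le> m" "j \<le> m" "2 \<le> i" "1 \<le> j" by (auto simp: zm_order_def)
      thus "op (zm_order m ! (i - 1)) (zm_order m ! (j - 1)) =
        op (zm_order m ! (i - 2)) (zm_order m ! nat ((int j - int k - 1) mod int (length (zm_order m))))"
        using eq[of i j] H assms(1) by (simp add: zm_nth zm_nth_mod del: of_nat_diff)
    qed (use assms in \<open>auto simp: zm_order_def\<close>)
  qed
qed

theorem theorem9p4:
  fixes m k :: nat and a :: int
  assumes "m > 1"
    and "0 \<le> a" and "a < int m"
    and "(2 * a\<^sup>2 - 2 * a + 1) mod int m = 0"
    and "1 \<le> k" and "k < m"
  shows "k_translatable (dot_op m a) (zm_order m) k \<longleftrightarrow>
         k_translatable (circ_op m a) (zm_order m) (m - k)"
proof -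
  have L1: "k_translatable (dot_op m a) (zm_order m) k \<longleftrightarrow> int m dvd (a + (1 - a) * int k)"
    by (rule key) (use assms in \<open>auto simp: dot_op_def\<close>)
  have L2: "k_translatable (circ_op m a) (zm_order m) (m - k) \<longleftrightarrow> int m dvd ((1 - a) + a * int (m - k))"
    by (rule key) (use assms in \<open>auto simp: circ_op_def\<close>)
  have e: "(1 - a) + a * int (m - k) = (1 - a - a * int k) + int m * a"
    using assms by (simp add: of_nat_diff algebra_simps)
  have L2': "k_translatable (circ_op m a) (zm_order m) (m - k) \<longleftrightarrow> int m dvd (1 - a - a * int k)"
    unfolding L2 e by (metis dvd_add_left_iff dvd_triv_left)
  define X where "X = a + (1 - a) * int k"
  define Y where "Y = 1 - a - a * int k"
  have D: "int m dvd (2 * a\<^sup>2 - 2 * a + 1)" using assms(4) by (simp add: dvd_eq_mod_eq_0)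
  have id: "a * X + (1 - a) * Y = 2 * a\<^sup>2 - 2 * a + 1"
    by (simp add: X_def Y_def power2_eq_square algebra_simps)
  have ca: "coprime (int m) a"
  proof (rule coprimeI)
    fix c assume "c dvd int m" "c dvd a"
    hence "c dvd (2 * a\<^sup>2 - 2 * a + 1)" "c dvd 2 * a\<^sup>2 - 2 * a"
      using D dvd_trans by (auto simp: power2_eq_square)
    thus "is_unit c" by (metis add_diff_cancel_left' dvd_diff diff_add_cancel)
  qed
  have cb: "coprime (int m) (1 - a)"
  proof (rule coprimeI)
    fix c assume "c dvd int m" "c dvd (1 - a)"
    hence "c dvd (2 * a\<^sup>2 - 2 * a + 1)" "c dvd (1 - a) * (1 - a)"
      using D dvd_trans by auto
    moreover have "2 * a\<^sup>2 - 2 * a + 1 = (1 - a) * (1 - a) + a * a"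
      by (simp add: power2_eq_square algebra_simps)
    ultimately have "c dvd a * a" by (metis dvd_add_right_iff)
    moreover have "c dvd a * (1 - a)" using \<open>c dvd 1 - a\<close> by simp
    ultimately have "c dvd a * a + a * (1 - a)" by simp
    hence "c dvd a" by (simp add: algebra_simps)
    with \<open>c dvd 1 - a\<close> have "c dvd (1 - a) + a" by (rule dvd_add)
    thus "is_unit c" by simp
  qed
  have "int m dvd X \<longleftrightarrow> int m dvd a * X" using ca by (simp add: coprime_dvd_mult_right_iff)
  also have "\<dots> \<longleftrightarrow> int m dvd (1 - a) * Y" using id D
    by (metis dvd_add_right_iff dvd_add_left_iff)
  also have "\<dots> \<longleftrightarrow> int m dvd Y" using cb by (simp add: coprime_dvd_mult_right_iff)
  finally show ?thesis using L1 L2' X_def Y_def by simp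
qed

end
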